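(* For any increment arrays $\underline{t}$ and $\underline{u}$ for $n$ agents, \[\bigcup_{i=1}^{n}\{C(i,\underline{t})\}\cap\bigcup_{i=1}^{n}\{C(i,\underline{u})\}\neq\varnothing\iff\underline{t}\approx\underline{u},\] and \[\bigcup_{i=1}^{n}\{C(i,\underline{t})\}=\bigcup_{i=1}^{n}\{C(i,\underline{u})\}\iff\underline{t}\approx\underline{u}.\]
   Context: Agent identifiers are $\{1,\ldots,n\}$, arithmetic on identifiers is modulo $n$ with representatives in $\{1,\ldots,n\}$ (a value $0$ is replaced by $n$). An increment array (IA) of size $s$ ($1\le s\le n$) for $n$ agents is a tuple $\underline{t}=\langle t_0,\ldots,t_{s-1}\rangle$ of non-negative integers with $\sum t_i=n-s$. Cumulative increments: $\varphi_1=0$, $\varphi_i=\sum_{k=0}^{i-2}(t_k+1)$ for $2\le i\le s+1$. The coalition generated from $x$ is $C(x,\underline{t})=\{x\}\cup\bigcup_{i=2}^{s}\{(x+\varphi_i)\bmod n\}$ (residues in $\{1,\ldots,n\}$). Two IAs are equivalent, $\underline{t}\approx\underline{u}$, if they have the same size $s$ and $\underline{u}$ is a circular shift of $\underline{t}$: there is $0\le k\le s-1$ with $\langle u_0,\ldots,u_{s-1}\rangle=\langle t_k,\ldots,t_{s-1},t_0,\ldots,t_{k-1}\rangle$. *)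

theory Defs
  imports Main
begin

text \<open>Agent identifiers are 1..n; residues modulo n are taken in {1..n}.\<close>
definition res :: "nat \<Rightarrow> nat \<Rightarrow> nat" where
  "res n a = ((a + n - 1) mod n) + 1"

definition is_IA :: "nat \<Rightarrow> nat list \<Rightarrow> bool" where
  "is_IA n t \<longleftrightarrow> 1 \<le> length t \<and> length t \<le> n \<and> sum_list t = n - length t"

definition phi :: "nat list \<Rightarrow> nat \<Rightarrow> nat" where
  "phi t i = (\<Sum>k = 0 ..< i - 1. t ! k + 1)"

definition coalition :: "nat \<Rightarrow> nat \<Rightarrow> nat list \<Rightarrow> nat set" where
  "coalition n x t = {x} \<union> (\<Union>i\<in>{2..length t}. {res n (x + phi t i)})"

definition coalitions :: "nat \<Rightarrow> nat list \<Rightarrow> nat set set" where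
  "coalitions n t = (\<Union>i\<in>{1..n}. {coalition n i t})"

definition IA_equiv :: "nat list \<Rightarrow> nat list \<Rightarrow> bool" where
  "IA_equiv t u \<longleftrightarrow> length t = length u \<and>
     (\<exists>k. k \<le> length t - 1 \<and> u = drop k t @ take k t)"

end

theory Submission
  imports Defs
begin

definition qq :: "nat list \<Rightarrow> nat \<Rightarrow> nat" where
  "qq t m = sum_list (map Suc (take m t))"

definition RR :: "nat \<Rightarrow> nat \<Rightarrow> nat list \<Rightarrow> nat set" where
  "RR n z t = (\<lambda>m. res n (z + qq t m)) ` {..<length t}"

lemma phi_qq_aux: "m \<le> length t \<Longrightarrow> (\<Sum>k = 0 ..< m. t ! k + 1) = qq t m"
proof (induction m)
  case 0 then show ?case by (simp add: qq_def)
next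
  case (Suc m)
  then show ?case by (simp add: qq_def take_Suc_conv_app_nth)
qed

lemma qq_Suc: "m < length t \<Longrightarrow> qq t (Suc m) = qq t m + Suc (t ! m)"
  by (simp add: qq_def take_Suc_conv_app_nth)

lemma sum_map_Suc: "sum_list (map Suc t) = sum_list t + length t"
  by (induction t) auto

lemma qq_full: "is_IA n t \<Longrightarrow> qq t (length t) = n"
  by (simp add: qq_def is_IA_def sum_map_Suc)

lemma qq_mono: "m < m' \<Longrightarrow> m' \<le> length t \<Longrightarrow> qq t m < qq t m'"
proof (induction m')
  case 0 then show ?case by simp
next
  case (Suc m')
  then have "qq t (Suc m') = qq t m' + Suc (t ! m')" by (simp add: qq_Suc)
  with Suc show ?case by (cases "m = m'") auto
qed

lemma qq_lt: "is_IA n t \<Longrightarrow> m < length t \<Longrightarrow> qq t m < n"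
  using qq_mono[of m "length t" t] qq_full by auto

lemma res_mod: "n \<ge> 1 \<Longrightarrow> a mod n = b mod n \<Longrightarrow> res n a = res n b"
proof -
  assume n: "n \<ge> 1" and e: "a mod n = b mod n"
  have "(a + (n - 1)) mod n = (b + (n - 1)) mod n" using e by (rule mod_add_cong) simp
  then show ?thesis unfolding res_def using n by simp
qed

lemma res_mod2: "n \<ge> 1 \<Longrightarrow> res n a mod n = a mod n"
proof -
  assume n: "n \<ge> 1"
  have "res n a mod n = ((a + n - 1) mod n + 1) mod n" unfolding res_def by simp
  also have "\<dots> = (a + n - 1 + 1) mod n" by (rule mod_add_left_eq)
  also have "\<dots> = a mod n" using n by simp
  finally show ?thesis .
qed

lemma addmod: "a mod n = b mod n \<Longrightarrow> (a + c) mod n = (b + c) mod (n::nat)"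
  by (rule mod_add_cong) simp_all

lemma negmod: "n \<ge> 1 \<Longrightarrow> (z + n - c mod n + c) mod (n::nat) = z mod n"
proof -
  assume n: "n \<ge> 1"
  have "c mod n < n" using n by simp
  have "(z + n - c mod n + c) mod n = (z + n - c mod n + c mod n) mod n" by (rule mod_add_right_eq[symmetric])
  also have "\<dots> = (z + n) mod n" using `c mod n < n` by simp
  finally show ?thesis by simp
qed

lemma cancel_aux: "(x + a) mod n = (x + b) mod n \<Longrightarrow> a \<le> b \<Longrightarrow> b < (n::nat) \<Longrightarrow> a = b"
proof -
  assume e: "(x + a) mod n = (x + b) mod n" and ab: "a \<le> b" and bn: "b < n"
  have "n dvd (x + b) - (x + a)" using mod_eq_dvd_iff_nat[of "x + a" "x + b" n] e ab by simp
  then have "n dvd b - a" by simp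
  moreover have "b - a < n" using bn by simp
  ultimately have "b - a = 0" by (metis dvd_imp_le not_less neq0_conv)
  then show ?thesis using ab by simp
qed

lemma cancel: "(x + a) mod n = (x + b) mod n \<Longrightarrow> a < n \<Longrightarrow> b < (n::nat) \<Longrightarrow> a = b"
  by (metis cancel_aux nat_le_linear)

lemma res_id: "1 \<le> x \<Longrightarrow> x \<le> n \<Longrightarrow> res n x = x"
proof -
  assume a: "1 \<le> x" "x \<le> n"
  have e: "x + n - 1 = (x - 1) + n" using a by simp
  have "x - 1 < n" using a by simp
  then have "(x - 1 + n) mod n = x - 1" by (simp only: mod_add_self2 mod_less)
  then have "(x + n - 1) mod n = x - 1" unfolding e .
  then show ?thesis unfolding res_def using a by simp
qed

lemma res_range: "n \<ge> 1 \<Longrightarrow> res n a \<in> {1..n}"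
  unfolding res_def by (simp add: Suc_leI)

lemma coalition_RR:
  assumes "1 \<le> x" "x \<le> n" "length t \<ge> 1"
  shows "coalition n x t = RR n x t"
proof
  have x0: "res n (x + qq t 0) = x" using assms by (simp add: qq_def res_id)
  show "coalition n x t \<subseteq> RR n x t"
  proof
    fix y assume "y \<in> coalition n x t"
    then consider "y = x" | i where "i \<in> {2..length t}" "y = res n (x + phi t i)"
      unfolding coalition_def by blast
    then show "y \<in> RR n x t"
    proof cases
      case 1
      have "0 < length t" using assms(3) by linarith
      then show ?thesis unfolding RR_def 1 using x0[symmetric] by (intro image_eqI[of _ _ 0]) simp_all
    next
      case 2
      have "phi t i = qq t (i - 1)" unfolding phi_def using 2 by (intro phi_qq_aux) auto
      then have "y = res n (x + qq t (i - 1))" using 2 by simp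
      moreover have "i - 1 < length t" using 2 by auto
      ultimately show ?thesis unfolding RR_def by (intro image_eqI[of _ _ "i - 1"]) simp_all
    qed
  qed
next
  show "RR n x t \<subseteq> coalition n x t"
  proof
    fix y assume "y \<in> RR n x t"
    then obtain m where m: "m < length t" "y = res n (x + qq t m)" unfolding RR_def by blast
    show "y \<in> coalition n x t"
    proof (cases "m = 0")
      case True
      then show ?thesis using m assms by (simp add: qq_def res_id coalition_def)
    next
      case False
      have "phi t (m + 1) = qq t m" unfolding phi_def using m phi_qq_aux[of m t] by simp
      then have "y = res n (x + phi t (m + 1))" using m by simp
      moreover have "m + 1 \<in> {2..length t}" using m False by simp
      ultimately show ?thesis unfolding coalition_def by blast
    qed
  qed
qed

lemma RR_cong: "n \<ge> 1 \<Longrightarrow> z mod n = z' mod n \<Longrightarrow> RR n z t = RR n z' t"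
proof -
  assume n: "n \<ge> 1" and e: "z mod n = z' mod n"
  have "res n (z + qq t m) = res n (z' + qq t m)" for m
    using n addmod[OF e] by (rule res_mod)
  then show ?thesis unfolding RR_def by simp
qed

lemma qq_rot1:
  assumes "k < length t" "m \<le> length t - k"
  shows "qq t (k + m) = qq t k + qq (drop k t @ take k t) m"
proof -
  have "take m (drop k t @ take k t) = take m (drop k t)" using assms by simp
  moreover have "take (k + m) t = take k t @ take m (drop k t)" by (rule take_add)
  ultimately show ?thesis unfolding qq_def by simp
qed

lemma qq_rot2:
  assumes "is_IA n t" "k < length t" "m \<ge> length t - k" "m \<le> length t"
  shows "qq (drop k t @ take k t) m + qq t k = n + qq t (m - (length t - k))"
proof -
  have "take m (drop k t @ take k t) = drop k t @ take (m - (length t - k)) t"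
    using assms by simp
  then have "qq (drop k t @ take k t) m = sum_list (map Suc (drop k t)) + qq t (m - (length t - k))"
    unfolding qq_def by simp
  moreover have "qq t k + sum_list (map Suc (drop k t)) = n"
  proof -
    have "n = sum_list (map Suc t)" using qq_full[OF assms(1)] unfolding qq_def by simp
    also have "\<dots> = sum_list (map Suc (take k t @ drop k t))" by simp
    also have "\<dots> = qq t k + sum_list (map Suc (drop k t))" unfolding qq_def by (simp only: map_append sum_list_append)
    finally show ?thesis by simp
  qed
  ultimately show ?thesis by simp
qed

lemma RR_rot:
  assumes "n \<ge> 1" "is_IA n t" "k < length t" "(z' + qq t k) mod n = z mod n"
  shows "RR n z (drop k t @ take k t) = RR n z' t"
proof -
  let ?w = "drop k t @ take k t"
  let ?s = "length t"
  have lw: "length ?w = ?s" by simp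
  have key: "(z + c) mod n = (z' + qq t k + c) mod n" for c
    using addmod[OF assms(4)[symmetric], of c] by simp
  show ?thesis
  proof
    show "RR n z ?w \<subseteq> RR n z' t"
    proof
      fix y assume "y \<in> RR n z ?w"
      then obtain m where m: "m < ?s" and y: "y = res n (z + qq ?w m)" unfolding RR_def lw by auto
      show "y \<in> RR n z' t"
      proof (cases "m < ?s - k")
        case True
        have e: "qq t (k + m) = qq t k + qq ?w m" using qq_rot1[OF assms(3)] True by simp
        have i: "k + m < ?s" using True by simp
        have "(z + qq ?w m) mod n = (z' + qq t (k + m)) mod n" using key e by (simp add: add.assoc)
        then have "y = res n (z' + qq t (k + m))" unfolding y by (rule res_mod[OF assms(1)])
        then show ?thesis using i unfolding RR_def by (intro image_eqI) simp_all
      next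
        case False
        then have mge: "m \<ge> ?s - k" by simp
        have e2: "qq ?w m + qq t k = n + qq t (m - (?s - k))"
          using qq_rot2[OF assms(2) assms(3) mge] m by simp
        have i: "m - (?s - k) < ?s" using m by simp
        have "(z + qq ?w m) mod n = (z' + qq t k + qq ?w m) mod n" by (rule key)
        also have "\<dots> = (z' + qq t (m - (?s - k)) + n) mod n" using e2 by (simp add: algebra_simps)
        also have "\<dots> = (z' + qq t (m - (?s - k))) mod n" by simp
        finally have "y = res n (z' + qq t (m - (?s - k)))" unfolding y by (rule res_mod[OF assms(1)])
        then show ?thesis using i unfolding RR_def by (intro image_eqI) simp_all
      qed
    qed
  next
    show "RR n z' t \<subseteq> RR n z ?w"
    proof
      fix y assume "y \<in> RR n z' t"
      then obtain m where m: "m < ?s" and y: "y = res n (z' + qq t m)" unfolding RR_def by auto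
      show "y \<in> RR n z ?w"
      proof (cases "k \<le> m")
        case True
        define m' where "m' = m - k"
        have mm: "m = k + m'" "m' \<le> ?s - k" "m' < ?s" using True m unfolding m'_def by auto
        have e: "qq t m = qq t k + qq ?w m'" using qq_rot1[OF assms(3) mm(2)] mm(1) by simp
        have "(z + qq ?w m') mod n = (z' + qq t m) mod n" using key e by (simp add: add.assoc)
        then have "y = res n (z + qq ?w m')" unfolding y using assms(1) res_mod by metis
        then show ?thesis using mm(3) unfolding RR_def lw by (intro image_eqI) simp_all
      next
        case False
        define m' where "m' = m + (?s - k)"
        have mm: "m' \<ge> ?s - k" "m' \<le> ?s" "m' < ?s" "m' - (?s - k) = m"
          using False m assms(3) unfolding m'_def by auto
        have e2: "qq ?w m' + qq t k = n + qq t m"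
          using qq_rot2[OF assms(2) assms(3) mm(1) mm(2)] mm(4) by simp
        have "(z + qq ?w m') mod n = (z' + qq t k + qq ?w m') mod n" by (rule key)
        also have "\<dots> = (z' + qq t m + n) mod n" using e2 by (simp add: algebra_simps)
        also have "\<dots> = (z' + qq t m) mod n" by simp
        finally have "y = res n (z + qq ?w m')" unfolding y using assms(1) res_mod by metis
        then show ?thesis using mm(3) unfolding RR_def lw by (intro image_eqI) simp_all
      qed
    qed
  qed
qed

lemma same_start:
  assumes "n \<ge> 1" "is_IA n t" "is_IA n u" "RR n x t = RR n x u"
  shows "t = u"
proof -
  let ?f = "\<lambda>a. res n (x + a)"
  define L where "L v = map (qq v) [0..<length v]" for v
  have inj: "inj_on ?f {..<n}"
  proof
    fix a b assume ab: "a \<in> {..<n}" "b \<in> {..<n}" "?f a = ?f b"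
    then have "res n (x + a) mod n = res n (x + b) mod n" by simp
    then have "(x + a) mod n = (x + b) mod n" by (simp add: res_mod2[OF assms(1)])
    then show "a = b" by (rule cancel) (use ab in simp_all)
  qed
  have RL: "RR n x v = ?f ` set (L v)" for v unfolding RR_def L_def by auto
  have sub: "set (L v) \<subseteq> {..<n}" if iv: "is_IA n v" for v
  proof
    fix a assume "a \<in> set (L v)"
    then obtain m where "m < length v" "a = qq v m" unfolding L_def by auto
    then show "a \<in> {..<n}" using qq_lt[OF iv] by simp
  qed
  have sorted: "sorted_wrt (<) (L v)" for v
    unfolding sorted_wrt_iff_nth_less
  proof (intro allI impI)
    fix i j assume ij: "i < j" "j < length (L v)"
    then have "j < length v" unfolding L_def by simp
    then show "L v ! i < L v ! j" using qq_mono[of i j v] ij unfolding L_def by simp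
  qed
  have "?f ` set (L t) = ?f ` set (L u)" using assms(4) RL by simp
  then have "set (L t) = set (L u)"
    using inj_on_image_eq_iff[OF inj sub[OF assms(2)] sub[OF assms(3)]] by simp
  then have LL: "L t = L u" by (rule strict_sorted_equal[OF sorted sorted])
  then have "length (L t) = length (L u)" by simp
  then have len: "length t = length u" unfolding L_def by simp
  have qeq: "qq t m = qq u m" if "m \<le> length t" for m
  proof (cases "m = length t")
    case True then show ?thesis using qq_full[OF assms(2)] qq_full[OF assms(3)] len by simp
  next
    case False
    then have ml: "m < length t" using that by simp
    have "L t ! m = qq t m" unfolding L_def using ml by simp
    moreover have "L u ! m = qq u m" unfolding L_def using ml len by simp
    ultimately show ?thesis using LL by simp
  qed
  show ?thesis
  proof (rule nth_equalityI[OF len])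
    fix i assume "i < length t"
    then show "t ! i = u ! i"
      using qeq[of i] qeq[of "Suc i"] qq_Suc[of i t] qq_Suc[of i u] len by simp
  qed
qed

lemma rot_IA: "is_IA n t \<Longrightarrow> is_IA n (drop k t @ take k t)"
proof -
  assume a: "is_IA n t"
  have h: "sum_list t = sum_list (take k t) + sum_list (drop k t)"
    by (metis append_take_drop_id sum_list_append)
  have "sum_list (drop k t @ take k t) = sum_list (drop k t) + sum_list (take k t)" by (rule sum_list_append)
  with h have s2: "sum_list (drop k t @ take k t) = sum_list t" by linarith
  have l2: "length (drop k t @ take k t) = length t" by simp
  show ?thesis unfolding is_IA_def l2 s2 using a[unfolded is_IA_def] .
qed

lemma equiv_imp_eq:
  assumes "n \<ge> 1" "is_IA n t" "is_IA n u" "IA_equiv t u"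
  shows "coalitions n t = coalitions n u"
proof -
  obtain k where k: "k \<le> length t - 1" "u = drop k t @ take k t"
    using assms(4) unfolding IA_equiv_def by blast
  have lt: "length t \<ge> 1" using assms(2) unfolding is_IA_def by simp
  then have kl: "k < length t" using k by simp
  have lu: "length u \<ge> 1" using assms(3) unfolding is_IA_def by simp
  have rot: "RR n z u = RR n z' t" if "(z' + qq t k) mod n = z mod n" for z z'
    unfolding k(2) by (rule RR_rot[OF assms(1,2) kl that])
  show ?thesis
  proof
    show "coalitions n t \<subseteq> coalitions n u"
    proof
      fix C assume "C \<in> coalitions n t"
      then obtain z' where z: "z' \<in> {1..n}" "C = coalition n z' t" unfolding coalitions_def by auto
      define z where "z = res n (z' + qq t k)"
      have zr: "z \<in> {1..n}" unfolding z_def by (rule res_range[OF assms(1)])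
      have "(z' + qq t k) mod n = z mod n" unfolding z_def by (rule res_mod2[OF assms(1), symmetric])
      then have "RR n z u = RR n z' t" by (rule rot)
      moreover have "C = RR n z' t" using z coalition_RR[of z' n t] lt by auto
      moreover have "coalition n z u = RR n z u" using zr coalition_RR[of z n u] lu by auto
      ultimately have "C = coalition n z u" by simp
      then show "C \<in> coalitions n u" using zr unfolding coalitions_def by auto
    qed
  next
    show "coalitions n u \<subseteq> coalitions n t"
    proof
      fix C assume "C \<in> coalitions n u"
      then obtain z where z: "z \<in> {1..n}" "C = coalition n z u" unfolding coalitions_def by auto
      define z' where "z' = res n (z + n - qq t k mod n)"
      have zr: "z' \<in> {1..n}" unfolding z'_def by (rule res_range[OF assms(1)])
      have "(z' + qq t k) mod n = z mod n"
        unfolding z'_def by (rule trans[OF addmod[OF res_mod2[OF assms(1)]] negmod[OF assms(1)]])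
      then have "RR n z u = RR n z' t" by (rule rot)
      moreover have "C = RR n z u" using z coalition_RR[of z n u] lu by auto
      moreover have "coalition n z' t = RR n z' t" using zr coalition_RR[of z' n t] lt by auto
      ultimately have "C = coalition n z' t" by simp
      then show "C \<in> coalitions n t" using zr unfolding coalitions_def by auto
    qed
  qed
qed

lemma inter_imp_equiv:
  assumes "n \<ge> 1" "is_IA n t" "is_IA n u" "coalitions n t \<inter> coalitions n u \<noteq> {}"
  shows "IA_equiv t u"
proof -
  obtain x y where xy: "x \<in> {1..n}" "y \<in> {1..n}" "coalition n x t = coalition n y u"
    using assms(4) unfolding coalitions_def by blast
  have lt: "length t \<ge> 1" using assms(2) unfolding is_IA_def by simp
  have lu: "length u \<ge> 1" using assms(3) unfolding is_IA_def by simp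
  have c1: "coalition n x t = RR n x t" using xy coalition_RR[of x n t] lt by auto
  have c2: "coalition n y u = RR n y u" using xy coalition_RR[of y n u] lu by auto
  have E: "RR n x t = RR n y u" using xy(3) c1 c2 by simp
  have "res n (y + qq u 0) = y" using xy(2) by (simp add: qq_def res_id)
  moreover have "0 < length u" using lu by linarith
  ultimately have "y \<in> RR n y u" unfolding RR_def by (intro image_eqI[of _ _ 0]) simp_all
  then obtain k where k: "k < length t" "y = res n (x + qq t k)" using E unfolding RR_def by auto
  have "(x + qq t k) mod n = y mod n" unfolding k(2) by (rule res_mod2[OF assms(1), symmetric])
  from RR_rot[OF assms(1,2) k(1) this] E
  have "RR n y (drop k t @ take k t) = RR n y u" by simp
  from same_start[OF assms(1) rot_IA[OF assms(2)] assms(3) this]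
  have ueq: "u = drop k t @ take k t" by simp
  have "length (drop k t @ take k t) = length t" by simp
  then have "length t = length u" using ueq by simp
  moreover have "k \<le> length t - 1" using k(1) by linarith
  ultimately show ?thesis unfolding IA_equiv_def using ueq by blast
qed

theorem theorem7:
  fixes n :: nat and t u :: "nat list"
  assumes "n \<ge> 1" and "is_IA n t" and "is_IA n u"
  shows "(coalitions n t \<inter> coalitions n u \<noteq> {} \<longleftrightarrow> IA_equiv t u)
       \<and> (coalitions n t = coalitions n u \<longleftrightarrow> IA_equiv t u)"
proof -
  have ne: "coalitions n t \<noteq> {}" using assms(1) unfolding coalitions_def by auto
  show ?thesis
    using equiv_imp_eq[OF assms] inter_imp_equiv[OF assms] ne by auto
qed

end
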